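(* Pareto-RR restricted to instances with a single place ($m=1$) and no lower quotas is solvable in polynomial time.
   Context: An instance of Refugee Resettlement (RR) consists of a set $F$ of families, a set $P=\{p_1,\dots,p_m\}$ of places, a set $S$ of $t$ services, a requirement vector $\boldsymbol{r}_i\in\mathbb{N}^t$ for each family, and lower and upper quota vectors $\underline{\boldsymbol{c}}_j,\bar{\boldsymbol{c}}_j\in\mathbb{N}^t$ for each place. An assignment is $\sigma\colon F\to P\cup\{\bot\}$ ($\bot$ = unassigned); the load of $p_j$ is $\sum_{f_i:\sigma(f_i)=p_j}\boldsymbol{r}_i$; $\sigma$ is feasible if $\underline{\boldsymbol{c}}_j\le$ load $\le\bar{\boldsymbol{c}}_j$ coordinatewise for all $p_j$. No lower quotas: all $\underline{\boldsymbol{c}}_j$ zero. Pareto-RR: each family has a weak order $\succeq_i$ over the places it finds acceptable, preferring each acceptable place to $\bot$; an assignment is acceptable if every family is unassigned or at an acceptable place; a feasible acceptable $\sigma$ is Pareto-optimal if no feasible acceptable $\sigma'$ satisfies $\sigma'(f_i)\succeq_i\sigma(f_i)$ for all families with strict preference for some family. Task: find a feasible acceptable Pareto-optimal assignment or report that none exists. *)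

theory Defs
  imports Main
begin

text \<open>Families are indexed 0..<n, places 0..<m (p_1 is index 0), services 0..<t.
  An assignment maps a family to Some j (place j) or None (unassigned, bottom).\<close>

record pareto_rr =
  nfam :: nat
  nplace :: nat
  nserv :: nat
  req :: "nat \<Rightarrow> nat \<Rightarrow> nat"      \<comment> \<open>req i s: requirement of family i for service s\<close>
  lowq :: "nat \<Rightarrow> nat \<Rightarrow> nat"     \<comment> \<open>lowq j s: lower quota of place j for service s\<close>
  upq :: "nat \<Rightarrow> nat \<Rightarrow> nat"      \<comment> \<open>upq j s: upper quota of place j for service s\<close>
  acc :: "nat \<Rightarrow> nat \<Rightarrow> bool"     \<comment> \<open>acc i j: family i finds place j acceptable\<close>
  pref :: "nat \<Rightarrow> nat \<Rightarrow> nat \<Rightarrow> bool" \<comment> \<open>pref i j k: j weakly preferred to k by family i\<close>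

type_synonym assignment = "nat \<Rightarrow> nat option"

definition load :: "pareto_rr \<Rightarrow> assignment \<Rightarrow> nat \<Rightarrow> nat \<Rightarrow> nat" where
  "load I \<sigma> j s = (\<Sum>i\<in>{i. i < nfam I \<and> \<sigma> i = Some j}. req I i s)"

definition feasible :: "pareto_rr \<Rightarrow> assignment \<Rightarrow> bool" where
  "feasible I \<sigma> \<longleftrightarrow>
     (\<forall>i < nfam I. \<forall>j. \<sigma> i = Some j \<longrightarrow> j < nplace I) \<and>
     (\<forall>j < nplace I. \<forall>s < nserv I. lowq I j s \<le> load I \<sigma> j s \<and> load I \<sigma> j s \<le> upq I j s)"

definition acceptable :: "pareto_rr \<Rightarrow> assignment \<Rightarrow> bool" where
  "acceptable I \<sigma> \<longleftrightarrow> (\<forall>i < nfam I. \<forall>j. \<sigma> i = Some j \<longrightarrow> acc I i j)"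

fun weakly_prefers :: "pareto_rr \<Rightarrow> nat \<Rightarrow> nat option \<Rightarrow> nat option \<Rightarrow> bool" where
  "weakly_prefers I i None None = True"
| "weakly_prefers I i (Some j) None = acc I i j"
| "weakly_prefers I i None (Some k) = (\<not> acc I i k)"
| "weakly_prefers I i (Some j) (Some k) = pref I i j k"

definition strictly_prefers :: "pareto_rr \<Rightarrow> nat \<Rightarrow> nat option \<Rightarrow> nat option \<Rightarrow> bool" where
  "strictly_prefers I i x y \<longleftrightarrow> weakly_prefers I i x y \<and> \<not> weakly_prefers I i y x"

definition pareto_optimal :: "pareto_rr \<Rightarrow> assignment \<Rightarrow> bool" where
  "pareto_optimal I \<sigma> \<longleftrightarrow> feasible I \<sigma> \<and> acceptable I \<sigma> \<and>
     \<not> (\<exists>\<sigma>'. feasible I \<sigma>' \<and> acceptable I \<sigma>' \<and>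
            (\<forall>i < nfam I. weakly_prefers I i (\<sigma>' i) (\<sigma> i)) \<and>
            (\<exists>i < nfam I. strictly_prefers I i (\<sigma>' i) (\<sigma> i)))"

text \<open>An instance with m = 1 and zero lower quotas is encoded as a list of families,
  each given by (p_1 acceptable?, requirement vector), together with the upper quota
  vector of p_1. The only weak order on the single place p_1 is the reflexive one.\<close>

definition wf_input :: "(bool \<times> nat list) list \<Rightarrow> nat list \<Rightarrow> bool" where
  "wf_input fams cap \<longleftrightarrow> (\<forall>f \<in> set fams. length (snd f) = length cap)"

definition decode_instance :: "(bool \<times> nat list) list \<Rightarrow> nat list \<Rightarrow> pareto_rr" where
  "decode_instance fams cap =
     \<lparr> nfam = length fams, nplace = 1, nserv = length cap,
       req = (\<lambda>i s. snd (fams ! i) ! s),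
       lowq = (\<lambda>j s. 0),
       upq = (\<lambda>j s. cap ! s),
       acc = (\<lambda>i j. j = 0 \<and> fst (fams ! i)),
       pref = (\<lambda>i j k. True) \<rparr>"

definition decode_assignment :: "bool list \<Rightarrow> assignment" where
  "decode_assignment xs = (\<lambda>i. if i < length xs \<and> xs ! i then Some 0 else None)"

text \<open>Size of the encoded input: number of numbers/flags it contains.\<close>
definition input_size :: "(bool \<times> nat list) list \<Rightarrow> nat list \<Rightarrow> nat" where
  "input_size fams cap = length cap + (\<Sum>f\<leftarrow>fams. length (snd f) + 1)"

fun fits :: "nat list \<Rightarrow> nat list \<Rightarrow> bool" where
  "fits [] [] = True"
| "fits (r # rs) (c # cs) = (if r \<le> c then fits rs cs else False)"
| "fits _ _ = False"

fun subtr :: "nat list \<Rightarrow> nat list \<Rightarrow> nat list" where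
  "subtr (c # cs) (r # rs) = (c - r) # subtr cs rs"
| "subtr _ _ = []"

fun greedy :: "nat list \<Rightarrow> (bool \<times> nat list) list \<Rightarrow> bool list" where
  "greedy cap [] = []"
| "greedy cap ((a, r) # fs) =
     (if a then (if fits r cap then True # greedy (subtr cap r) fs else False # greedy cap fs)
      else False # greedy cap fs)"

definition solve :: "(bool \<times> nat list) list \<Rightarrow> nat list \<Rightarrow> bool list option" where
  "solve fams cap = Some (greedy cap fams)"

text \<open>Running-time functions, written by hand following the convention of HOL-Library's
  time_fun command (unit cost per function call; primitive operations on nat/bool free;
  a call costs 1 plus the time of the calls it makes).\<close>

fun T_fits :: "nat list \<Rightarrow> nat list \<Rightarrow> nat" where
  "T_fits [] [] = 1"
| "T_fits (r # rs) (c # cs) = (if r \<le> c then T_fits rs cs else 0) + 1"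
| "T_fits _ _ = 1"

fun T_subtr :: "nat list \<Rightarrow> nat list \<Rightarrow> nat" where
  "T_subtr (c # cs) (r # rs) = T_subtr cs rs + 1"
| "T_subtr _ _ = 1"

fun T_greedy :: "nat list \<Rightarrow> (bool \<times> nat list) list \<Rightarrow> nat" where
  "T_greedy cap [] = 1"
| "T_greedy cap ((a, r) # fs) =
     (if a then T_fits r cap + (if fits r cap then T_subtr cap r + T_greedy (subtr cap r) fs
                                 else T_greedy cap fs)
      else T_greedy cap fs) + 1"

definition T_solve :: "(bool \<times> nat list) list \<Rightarrow> nat list \<Rightarrow> nat" where
  "T_solve fams cap = T_greedy cap fams + 1"

end

theory Submission
  imports Defs
begin

lemma fits_iff: "fits r c \<longleftrightarrow> length r = length c \<and> (\<forall>s<length c. r!s \<le> c!s)"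
proof (induction r c rule: fits.induct)
  case (2 r rs c cs)
  then show ?case by (auto simp: nth_Cons split: nat.splits)
qed auto

lemma subtr_len: "length (subtr c r) = min (length c) (length r)"
  by (induction c r rule: subtr.induct) auto

lemma subtr_nth: "s < length c \<Longrightarrow> s < length r \<Longrightarrow> subtr c r ! s = c!s - r!s"
  by (induction c r arbitrary: s rule: subtr.induct) (auto simp: nth_Cons split: nat.splits)

definition pre :: "nat \<Rightarrow> bool list \<Rightarrow> (bool \<times> nat list) list \<Rightarrow> nat \<Rightarrow> nat" where
  "pre s xs fams n = (\<Sum>j<n. if xs!j then snd (fams!j) ! s else 0)"

lemma pre_Cons: "pre s (x#xs) (f#fams) (Suc n) = (if x then snd f ! s else 0) + pre s xs fams n"
  unfolding pre_def by (simp add: sum.lessThan_Suc_shift del: sum.lessThan_Suc) (simp only: nth_Cons_Suc)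

lemma greedy_main:
  "(\<forall>f\<in>set fams. length (snd f) = length cap) \<Longrightarrow>
   length (greedy cap fams) = length fams \<and>
   (\<forall>s<length cap. pre s (greedy cap fams) fams (length fams) \<le> cap!s) \<and>
   (\<forall>i<length fams. greedy cap fams ! i \<longrightarrow> fst (fams!i)) \<and>
   (\<forall>i<length fams. fst (fams!i) \<and> \<not> greedy cap fams ! i \<longrightarrow>
      (\<exists>s<length cap. pre s (greedy cap fams) fams i + snd (fams!i) ! s > cap!s))"
proof (induction fams arbitrary: cap)
  case Nil
  then show ?case by (simp add: pre_def)
next
  case (Cons f fs)
  obtain a r where f: "f = (a, r)" by fastforce
  have lr: "length r = length cap" using Cons.prems f by auto
  show ?case
  proof (cases "a \<and> fits r cap")
    case True
    let ?c = "subtr cap r"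
    have lc: "length ?c = length cap" using lr by (simp add: subtr_len)
    have IH: "length (greedy ?c fs) = length fs \<and>
     (\<forall>s<length ?c. pre s (greedy ?c fs) fs (length fs) \<le> ?c!s) \<and>
     (\<forall>i<length fs. greedy ?c fs ! i \<longrightarrow> fst (fs!i)) \<and>
     (\<forall>i<length fs. fst (fs!i) \<and> \<not> greedy ?c fs ! i \<longrightarrow>
      (\<exists>s<length ?c. pre s (greedy ?c fs) fs i + snd (fs!i) ! s > ?c!s))"
      using Cons.IH[of ?c] Cons.prems lc by auto
    have g: "greedy cap (f#fs) = True # greedy ?c fs" using True f by simp
    have fi: "\<forall>s<length cap. r!s \<le> cap!s" using True fits_iff by blast
    have cn: "\<And>s. s < length cap \<Longrightarrow> ?c!s = cap!s - r!s" using lr subtr_nth by simp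
    show ?thesis unfolding g
    proof (intro conjI allI impI)
      show "length (True # greedy ?c fs) = length (f # fs)" using IH by simp
    next
      fix s assume s: "s < length cap"
      have "pre s (True # greedy ?c fs) (f # fs) (length (f#fs)) = r!s + pre s (greedy ?c fs) fs (length fs)"
        using pre_Cons f by simp
      also have "\<dots> \<le> cap!s" using IH s lc cn[OF s] fi s by fastforce
      finally show "pre s (True # greedy ?c fs) (f # fs) (length (f#fs)) \<le> cap!s" .
    next
      fix i assume "i < length (f#fs)" "(True # greedy ?c fs) ! i"
      then show "fst ((f#fs)!i)" using IH True f by (cases i) auto
    next
      fix i assume i: "i < length (f#fs)" "fst ((f#fs)!i) \<and> \<not> (True # greedy ?c fs) ! i"
      then obtain i' where i': "i = Suc i'" "i' < length fs" by (cases i) auto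
      then obtain s where s: "s < length cap" "pre s (greedy ?c fs) fs i' + snd (fs!i') ! s > ?c!s"
        using IH i lc by auto
      have "pre s (True # greedy ?c fs) (f # fs) i = r!s + pre s (greedy ?c fs) fs i'"
        using pre_Cons f i' by simp
      then show "\<exists>s<length cap. pre s (True # greedy ?c fs) (f # fs) i + snd ((f#fs)!i) ! s > cap!s"
        using s cn[OF s(1)] fi i' by (intro exI[of _ s]) auto
    qed
  next
    case False
    have IH: "length (greedy cap fs) = length fs \<and>
     (\<forall>s<length cap. pre s (greedy cap fs) fs (length fs) \<le> cap!s) \<and>
     (\<forall>i<length fs. greedy cap fs ! i \<longrightarrow> fst (fs!i)) \<and>
     (\<forall>i<length fs. fst (fs!i) \<and> \<not> greedy cap fs ! i \<longrightarrow>
      (\<exists>s<length cap. pre s (greedy cap fs) fs i + snd (fs!i) ! s > cap!s))"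
      using Cons.IH[of cap] Cons.prems by auto
    have g: "greedy cap (f#fs) = False # greedy cap fs" using False f by auto
    show ?thesis unfolding g
    proof (intro conjI allI impI)
      show "length (False # greedy cap fs) = length (f # fs)" using IH by simp
    next
      fix s assume s: "s < length cap"
      have "pre s (False # greedy cap fs) (f # fs) (length (f#fs)) = pre s (greedy cap fs) fs (length fs)"
        using pre_Cons by simp
      then show "pre s (False # greedy cap fs) (f # fs) (length (f#fs)) \<le> cap!s" using IH s by simp
    next
      fix i assume "i < length (f#fs)" "(False # greedy cap fs) ! i"
      then show "fst ((f#fs)!i)" using IH by (cases i) auto
    next
      fix i assume i: "i < length (f#fs)" "fst ((f#fs)!i) \<and> \<not> (False # greedy cap fs) ! i"
      show "\<exists>s<length cap. pre s (False # greedy cap fs) (f # fs) i + snd ((f#fs)!i) ! s > cap!s"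
      proof (cases i)
        case 0
        then have a: a using i f by simp
        then have "\<not> fits r cap" using False by simp
        then obtain s where "s < length cap" "r!s > cap!s" using fits_iff lr by (meson not_le)
        then show ?thesis using 0 f by (intro exI[of _ s]) (simp add: pre_def)
      next
        case (Suc i')
        then obtain s where s: "s < length cap" "pre s (greedy cap fs) fs i' + snd (fs!i') ! s > cap!s"
          using IH i by auto
        have "pre s (False # greedy cap fs) (f # fs) i = pre s (greedy cap fs) fs i'"
          using pre_Cons Suc by simp
        then show ?thesis using s Suc by (intro exI[of _ s]) auto
      qed
    qed
  qed
qed

lemma T_fits_le: "T_fits r c \<le> length r + 1"
  by (induction r c rule: T_fits.induct) auto

lemma T_subtr_le: "T_subtr c r \<le> length r + 1"
  by (induction c r rule: T_subtr.induct) auto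

lemma T_greedy_le: "T_greedy cap fams \<le> 1 + 3 * (\<Sum>f\<leftarrow>fams. length (snd f) + 1)"
proof (induction fams arbitrary: cap)
  case Nil
  then show ?case by simp
next
  case (Cons f fs)
  obtain a r where f: "f = (a, r)" by fastforce
  have "T_greedy cap (f#fs) \<le> (length r + 1) + ((length r + 1) + (1 + 3 * (\<Sum>f\<leftarrow>fs. length (snd f) + 1))) + 1"
    using Cons.IH[of cap] Cons.IH[of "subtr cap r"] T_fits_le[of r cap] T_subtr_le[of cap r] f
    by auto
  then show ?case using f by simp
qed

theorem proposition12:
  "\<exists>c k :: nat. \<forall>fams cap. wf_input fams cap \<longrightarrow>
     (case solve fams cap of
        None \<Rightarrow> \<not> (\<exists>\<sigma>. pareto_optimal (decode_instance fams cap) \<sigma>)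
      | Some xs \<Rightarrow> length xs = length fams \<and>
                   pareto_optimal (decode_instance fams cap) (decode_assignment xs)) \<and>
     T_solve fams cap \<le> c * (input_size fams cap + 1) ^ k"
proof (intro exI allI impI conjI)
  fix fams cap
  assume wf: "wf_input fams cap"
  show "T_solve fams cap \<le> 3 * (input_size fams cap + 1) ^ 1"
    using T_greedy_le[of cap fams] unfolding T_solve_def input_size_def by simp
  let ?xs = "greedy cap fams"
  let ?I = "decode_instance fams cap"
  let ?\<sigma> = "decode_assignment ?xs"
  have M: "length ?xs = length fams \<and>
   (\<forall>s<length cap. pre s ?xs fams (length fams) \<le> cap!s) \<and>
   (\<forall>i<length fams. ?xs ! i \<longrightarrow> fst (fams!i)) \<and>
   (\<forall>i<length fams. fst (fams!i) \<and> \<not> ?xs ! i \<longrightarrow>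
      (\<exists>s<length cap. pre s ?xs fams i + snd (fams!i) ! s > cap!s))"
    using greedy_main wf unfolding wf_input_def by blast
  have ld: "load ?I \<sigma> 0 s = (\<Sum>i<length fams. if \<sigma> i = Some 0 then snd (fams!i) ! s else 0)" for \<sigma> s
  proof -
    have "{i. i < nfam ?I \<and> \<sigma> i = Some 0} = {i\<in>{..<length fams}. \<sigma> i = Some 0}"
      by (auto simp: decode_instance_def)
    then have "load ?I \<sigma> 0 s = (\<Sum>i\<in>{i\<in>{..<length fams}. \<sigma> i = Some 0}. snd (fams!i) ! s)"
      unfolding load_def by (simp add: decode_instance_def)
    also have "\<dots> = (\<Sum>i<length fams. if \<sigma> i = Some 0 then snd (fams!i) ! s else 0)"
      by (rule sum.inter_filter) simp
    finally show ?thesis .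
  qed
  have sig: "?\<sigma> i = Some 0 \<longleftrightarrow> i < length fams \<and> ?xs!i" for i
    using M by (auto simp: decode_assignment_def)
  have feas: "feasible ?I ?\<sigma>"
    unfolding feasible_def
  proof (intro conjI allI impI)
    fix i j assume "i < nfam ?I" "?\<sigma> i = Some j"
    then show "j < nplace ?I" by (auto simp: decode_assignment_def decode_instance_def split: if_splits)
  next
    fix j s assume j: "j < nplace ?I" and s: "s < nserv ?I"
    then show "lowq ?I j s \<le> load ?I ?\<sigma> j s" by (simp add: decode_instance_def)
    have j0: "j = 0" using j by (simp add: decode_instance_def)
    have "load ?I ?\<sigma> j s = pre s ?xs fams (length fams)"
      unfolding j0 ld pre_def using sig by (intro sum.cong) auto
    then show "load ?I ?\<sigma> j s \<le> upq ?I j s" using M s by (simp add: decode_instance_def)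
  qed
  have accp: "acceptable ?I ?\<sigma>"
    unfolding acceptable_def using M
    by (auto simp: decode_assignment_def decode_instance_def split: if_splits)
  have po: "pareto_optimal ?I ?\<sigma>"
    unfolding pareto_optimal_def
  proof (intro conjI feas accp notI)
    assume "\<exists>\<sigma>'. feasible ?I \<sigma>' \<and> acceptable ?I \<sigma>' \<and>
            (\<forall>i < nfam ?I. weakly_prefers ?I i (\<sigma>' i) (?\<sigma> i)) \<and>
            (\<exists>i < nfam ?I. strictly_prefers ?I i (\<sigma>' i) (?\<sigma> i))"
    then obtain \<sigma>' i where f': "feasible ?I \<sigma>'" and a': "acceptable ?I \<sigma>'"
      and w: "\<forall>i < nfam ?I. weakly_prefers ?I i (\<sigma>' i) (?\<sigma> i)"
      and i: "i < length fams" "strictly_prefers ?I i (\<sigma>' i) (?\<sigma> i)"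
      by (auto simp: decode_instance_def)
    have pl: "\<And>j k. j < length fams \<Longrightarrow> \<sigma>' j = Some k \<Longrightarrow> k = 0"
      using f' by (auto simp: feasible_def decode_instance_def)
    have keep: "\<sigma>' j = Some 0" if "j < length fams" "?xs!j" for j
    proof -
      have "?\<sigma> j = Some 0" using sig that by blast
      moreover have "fst (fams!j)" using M that by blast
      ultimately show ?thesis using w that pl[of j]
        by (cases "\<sigma>' j") (auto simp: decode_instance_def)
    qed
    have ni: "\<not> ?xs!i"
    proof
      assume "?xs!i"
      then have "?\<sigma> i = Some 0" "\<sigma>' i = Some 0" using sig keep i by auto
      then show False using i by (simp add: strictly_prefers_def decode_instance_def)
    qed
    then have sN: "?\<sigma> i = None" by (simp add: decode_assignment_def)
    have si: "\<sigma>' i = Some 0" and fi: "fst (fams!i)"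
      using i sN pl[of i] by (cases "\<sigma>' i"; auto simp: strictly_prefers_def decode_instance_def)+
    obtain s where s: "s < length cap" "pre s ?xs fams i + snd (fams!i) ! s > cap!s"
      using M i fi ni by blast
    have "pre s ?xs fams i + snd (fams!i) ! s =
        (\<Sum>j<length fams. (if j < i \<and> ?xs!j then snd (fams!j) ! s else 0) + (if j = i then snd (fams!i) ! s else 0))"
    proof -
      have "(\<Sum>j<length fams. if j < i \<and> ?xs!j then snd (fams!j) ! s else 0) = pre s ?xs fams i"
        unfolding pre_def using i
        by (intro sum.mono_neutral_cong_right) auto
      moreover have "(\<Sum>j<length fams. if j = i then snd (fams!i) ! s else 0) = snd (fams!i) ! s"
        using i by simp
      ultimately show ?thesis by (simp add: sum.distrib)
    qed
    also have "\<dots> \<le> (\<Sum>j<length fams. if \<sigma>' j = Some 0 then snd (fams!j) ! s else 0)"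
      using keep si by (intro sum_mono) auto
    also have "\<dots> = load ?I \<sigma>' 0 s" using ld by simp
    also have "\<dots> \<le> cap!s" using f' s by (auto simp: feasible_def decode_instance_def)
    finally show False using s by simp
  qed
  show "case solve fams cap of
        None \<Rightarrow> \<not> (\<exists>\<sigma>. pareto_optimal ?I \<sigma>)
      | Some xs \<Rightarrow> length xs = length fams \<and> pareto_optimal ?I (decode_assignment xs)"
    using M po by (simp add: solve_def)
qed

end
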